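(* Let $(G,\tau)$ be a non-discrete metrizable topological group. Then the coarse structure of $(G,\mathcal{S}_\tau)$ does not have a linearly ordered (by inclusion) base. In particular, $(G,\mathcal{S}_\tau)$ is not metrizable.
   Context: $\mathcal{S}_\tau$ is the smallest group ideal on $G$ containing every set $\{x\}\cup\{x_n:n\in\omega\}$ with $x_n\to x$ in $(G,\tau)$. A group ideal on $G$ is a family of subsets containing all finite subsets, closed under subsets and under $(A,B)\mapsto AB^{-1}$; it defines the coarse structure on $G$ with base $\{\{(x,y):x\in Ay\}:A\in\mathcal{I}\}$. A base of a coarse structure $\mathcal{E}$ is a subfamily $\mathcal{E}'$ such that every $E\in\mathcal{E}$ is contained in some member of $\mathcal{E}'$. A coarse space is metrizable iff its coarse structure has a countable base. *)

theory Defs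
  imports "HOL-Analysis.Analysis"
begin

text \<open>Groups are written additively (class group_add, not necessarily commutative);
  the product A B^{-1} becomes the set of all a - b = a + (- b).\<close>

definition set_diff_grp :: "'a::group_add set \<Rightarrow> 'a set \<Rightarrow> 'a set" where
  "set_diff_grp A B = {a - b | a b. a \<in> A \<and> b \<in> B}"

definition group_ideal :: "'a::group_add set set \<Rightarrow> bool" where
  "group_ideal I \<longleftrightarrow>
     (\<forall>F. finite F \<longrightarrow> F \<in> I) \<and>
     (\<forall>A\<in>I. \<forall>B. B \<subseteq> A \<longrightarrow> B \<in> I) \<and>
     (\<forall>A\<in>I. \<forall>B\<in>I. set_diff_grp A B \<in> I)"

definition S_tau :: "'a::{topological_space, group_add} set set" where
  "S_tau = \<Inter>{I. group_ideal I \<and>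
       (\<forall>(X::nat \<Rightarrow> 'a) x. X \<longlonglongrightarrow> x \<longrightarrow> insert x (range X) \<in> I)}"

definition entourage :: "'a::group_add set \<Rightarrow> ('a \<times> 'a) set" where
  "entourage A = {(x, y). x - y \<in> A}"

definition coarse_structure :: "'a::group_add set set \<Rightarrow> ('a \<times> 'a) set set" where
  "coarse_structure I = {E. \<exists>A\<in>I. E \<subseteq> entourage A}"

definition is_base :: "('a \<times> 'a) set set \<Rightarrow> ('a \<times> 'a) set set \<Rightarrow> bool" where
  "is_base B C \<longleftrightarrow> B \<subseteq> C \<and> (\<forall>E\<in>C. \<exists>E'\<in>B. E \<subseteq> E')"

definition linearly_ordered :: "'b set set \<Rightarrow> bool" where
  "linearly_ordered B \<longleftrightarrow> (\<forall>X\<in>B. \<forall>Y\<in>B. X \<subseteq> Y \<or> Y \<subseteq> X)"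

definition coarse_metrizable :: "('a \<times> 'a) set set \<Rightarrow> bool" where
  "coarse_metrizable C \<longleftrightarrow> (\<exists>B. countable B \<and> is_base B C)"

end

theory Submission
  imports Defs
begin

lemma seq_to_lim:
  fixes y :: "nat \<Rightarrow> 'a::metric_space"
  assumes "\<And>n. dist (y n) a < 1 / Suc n"
  shows "y \<longlonglongrightarrow> a"
proof (rule metric_LIMSEQ_I)
  fix r :: real assume "r > 0"
  then obtain N where N: "1 / real (Suc N) < r" using nat_approx_posE by blast
  show "\<exists>no. \<forall>n\<ge>no. dist (y n) a < r"
  proof (intro exI allI impI)
    fix n assume "N \<le> n"
    then have "1 / real (Suc n) \<le> 1 / real (Suc N)" by (simp add: frac_le)
    then show "dist (y n) a < r" using assms[of n] N by linarith
  qed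
qed

lemma compact_seq_lim:
  fixes f :: "nat \<Rightarrow> 'a::topological_space"
  assumes "f \<longlonglongrightarrow> l"
  shows "compact (insert l (range f))"
proof (rule compactI)
  fix C assume C: "\<forall>t\<in>C. open t" "insert l (range f) \<subseteq> \<Union>C"
  then obtain U where U: "U \<in> C" "l \<in> U" by blast
  then have "eventually (\<lambda>n. f n \<in> U) sequentially"
    using assms C(1) topological_tendstoD by blast
  then obtain N where N: "\<And>n. n \<ge> N \<Longrightarrow> f n \<in> U" by (auto simp: eventually_sequentially)
  have "\<forall>n. \<exists>V\<in>C. f n \<in> V" using C by blast
  then obtain V where V: "\<And>n. V n \<in> C" "\<And>n. f n \<in> V n" by metis
  show "\<exists>C'\<subseteq>C. finite C' \<and> insert l (range f) \<subseteq> \<Union>C'"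
  proof (intro exI conjI)
    show "insert U (V ` {..<N}) \<subseteq> C" using U V by blast
    show "finite (insert U (V ` {..<N}))" by simp
    show "insert l (range f) \<subseteq> \<Union>(insert U (V ` {..<N}))"
    proof
      fix z assume "z \<in> insert l (range f)"
      then consider "z = l" | n where "z = f n" by blast
      then show "z \<in> \<Union>(insert U (V ` {..<N}))"
      proof cases
        case 1 then show ?thesis using U by blast
      next
        case 2 then show ?thesis using N V
          by (cases "n < N") (auto simp: not_less)
      qed
    qed
  qed
qed

definition Inv :: "'a::topological_space set set" where
  "Inv = {A. \<exists>K. compact K \<and> countable K \<and> A \<subseteq> K}"

lemma Inv_ideal: "group_ideal (Inv :: 'a::{topological_group_add} set set)"
  unfolding group_ideal_def
proof (intro conjI allI ballI impI)
  fix F :: "'a set" assume "finite F" then show "F \<in> Inv"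
    unfolding Inv_def using finite_imp_compact countable_finite by blast
next
  fix A B :: "'a set" assume "A \<in> Inv" "B \<subseteq> A" then show "B \<in> Inv"
    unfolding Inv_def by blast
next
  fix A B :: "'a set" assume "A \<in> Inv" "B \<in> Inv"
  then obtain K1 K2 where K: "compact K1" "countable K1" "A \<subseteq> K1" "compact K2" "countable K2" "B \<subseteq> K2"
    unfolding Inv_def by blast
  let ?K = "(\<lambda>p. fst p - snd p) ` (K1 \<times> K2)"
  have "compact ?K"
    by (intro compact_continuous_image compact_Times K continuous_intros)
  moreover have "countable ?K" using K by auto
  moreover have "set_diff_grp A B \<subseteq> ?K"
    unfolding set_diff_grp_def using K by force
  ultimately show "set_diff_grp A B \<in> Inv" unfolding Inv_def by blast
qed

lemma S_tau_Inv: "(S_tau :: 'a::{topological_group_add} set set) \<subseteq> Inv"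
proof -
  have "\<forall>(X::nat \<Rightarrow> 'a) x. X \<longlonglongrightarrow> x \<longrightarrow> insert x (range X) \<in> Inv"
    unfolding Inv_def using compact_seq_lim by blast
  then show ?thesis unfolding S_tau_def using Inv_ideal by blast
qed

lemma S_tau_seq: "(X::nat \<Rightarrow> 'a::{topological_space, group_add}) \<longlonglongrightarrow> x \<Longrightarrow> insert x (range X) \<in> S_tau"
  unfolding S_tau_def by blast

lemma S_tau_fin: "finite (F::'a::{topological_space, group_add} set) \<Longrightarrow> F \<in> S_tau"
  unfolding S_tau_def group_ideal_def by blast

lemma perfect_countable_compact:
  fixes T :: "'a::metric_space set"
  assumes "compact T" "countable T" "T \<noteq> {}" "\<And>z. z \<in> T \<Longrightarrow> z islimpt T"
  shows False
proof -
  let ?X = "top_of_set T"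
  have cs: "compact_space ?X"
    by (simp add: assms(1) compact_space_subtopology)
  have hs: "Hausdorff_space ?X"
    by (simp add: Hausdorff_space_subtopology)
  have lc: "locally_compact_space ?X"
    using cs compact_imp_locally_compact_space by blast
  have rs: "regular_space ?X"
    using cs hs compact_Hausdorff_imp_regular_space by blast
  have cl: "closedin ?X {z}" if "z \<in> T" for z
    using that by (simp add: closedin_subtopology_refl closed_Int_compact) 
  have int: "?X interior_of {z} = {}" if "z \<in> T" for z
  proof (rule ccontr)
    assume "?X interior_of {z} \<noteq> {}"
    then obtain U where U: "openin ?X U" "U \<noteq> {}" "U \<subseteq> {z}"
      by (metis interior_of_subset openin_interior_of)
    then have "U = {z}" by blast
    then obtain V where V: "open V" "{z} = T \<inter> V" using U(1) by (auto simp: openin_open)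
    then show False using assms(4)[OF that] unfolding islimpt_def by blast
  qed
  have "?X interior_of \<Union>((\<lambda>z. {z}) ` T) = {}"
    by (rule Baire_category_alt) (use lc rs assms(2) cl int in auto)
  moreover have "\<Union>((\<lambda>z. {z}) ` T) = topspace ?X" by auto
  ultimately show False using assms(3) by (metis interior_of_topspace topspace_euclidean_subtopology)
qed

lemma no_isolated:
  assumes "\<exists>x::'a::{metric_space, topological_group_add}. \<not> open {x}"
  shows "\<not> open {z::'a}"
proof
  assume oz: "open {z}"
  obtain x :: 'a where x: "\<not> open {x}" using assms by blast
  have "open ((\<lambda>y. y - x + z) -` {z})"
    by (rule continuous_open_vimage[OF oz]) (intro continuous_intros)
  moreover have "(\<lambda>y. y - x + z) -` {z} = {x}"
  proof
    show "(\<lambda>y. y - x + z) -` {z} \<subseteq> {x}"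
    proof
      fix y assume "y \<in> (\<lambda>y. y - x + z) -` {z}"
      then have "y - x + z = z" by simp
      then have "y - x + z = 0 + z" by simp
      then have "y - x = 0" by (simp only: add_right_cancel)
      then show "y \<in> {x}" by (simp only: right_minus_eq singleton_iff)
    qed
    show "{x} \<subseteq> (\<lambda>y. y - x + z) -` {z}" by simp
  qed
  ultimately show False using x by simp
qed

lemma open_limpt:
  assumes "\<exists>x::'a::{metric_space, topological_group_add}. \<not> open {x}"
    and "open U" "(z::'a) \<in> U"
  shows "z islimpt U"
  unfolding islimpt_def
proof (intro allI impI)
  fix T assume T: "z \<in> T" "open T"
  show "\<exists>y\<in>U. y \<in> T \<and> y \<noteq> z"
  proof (rule ccontr)
    assume "\<not> ?thesis"
    then have "T \<inter> U = {z}" using T assms(3) by blast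
    then have "open {z}" using T assms(2) by (metis open_Int)
    then show False using no_isolated[OF assms(1)] by blast
  qed
qed

lemma escape:
  assumes nd: "\<exists>x::'a::{metric_space, topological_group_add}. \<not> open {x}"
    and K: "compact (K::'a set)" "countable K" and e: "e > 0"
  shows "\<exists>y. dist y 0 < e \<and> y \<notin> K"
proof (rule ccontr)
  assume "\<not> ?thesis"
  then have sub: "ball 0 e \<subseteq> K" by (auto simp: dist_commute)
  let ?T = "closure (ball (0::'a) e)"
  have TK: "?T \<subseteq> K" using sub K(1) by (simp add: closure_minimal compact_imp_closed)
  show False
  proof (rule perfect_countable_compact[of ?T])
    show "compact ?T"
    proof -
      have "compact (K \<inter> ?T)" by (rule compact_Int_closed[OF K(1) closed_closure])
      moreover have "K \<inter> ?T = ?T" using TK by blast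
      ultimately show ?thesis by simp
    qed
    show "countable ?T" using TK K(2) countable_subset by blast
    show "?T \<noteq> {}" using e by auto
    fix z assume "z \<in> ?T"
    then have "z \<in> ball 0 e \<or> z islimpt ball 0 e" by (simp add: closure_def)
    then have "z islimpt ball 0 e" using open_limpt[OF nd] by blast
    then show "z islimpt ?T" by (meson closure_subset islimpt_subset)
  qed
qed

lemma L1:
  fixes \<D> :: "'a::{metric_space, topological_group_add} set set"
  assumes nd: "\<exists>x::'a. \<not> open {x}"
    and cD: "countable \<D>" and D: "\<And>D. D \<in> \<D> \<Longrightarrow> \<exists>K. compact K \<and> countable K \<and> D \<subseteq> K"
  shows "\<exists>X\<in>S_tau. \<forall>D\<in>\<D>. \<not> X \<subseteq> D"
proof (cases "\<D> = {}")
  case True then show ?thesis using S_tau_fin[of "{}"] by blast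
next
  case False
  let ?f = "from_nat_into \<D>"
  have "\<forall>n. \<exists>K. compact K \<and> countable K \<and> ?f n \<subseteq> K"
    using D from_nat_into[OF False] by blast
  then obtain K where K: "\<And>n. compact (K n)" "\<And>n. countable (K n)" "\<And>n. ?f n \<subseteq> K n" by metis
  define L where "L n = \<Union>(K ` {..n})" for n
  have L: "compact (L n)" "countable (L n)" for n
    unfolding L_def using K by (auto intro!: compact_UN)
  have "\<forall>n. \<exists>y. dist y 0 < 1 / Suc n \<and> y \<notin> L n"
    using escape[OF nd L] by simp
  then obtain y where y: "\<And>n. dist (y n) 0 < 1 / Suc n" "\<And>n. y n \<notin> L n" by metis
  have "y \<longlonglongrightarrow> 0" using seq_to_lim y(1) by blast
  then have X: "insert 0 (range y) \<in> S_tau" by (rule S_tau_seq)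
  show ?thesis
  proof (intro bexI[OF _ X] ballI)
    fix D assume "D \<in> \<D>"
    then obtain n where "D = ?f n" by (metis cD from_nat_into_surj)
    moreover have "y n \<notin> K n" using y(2)[of n] unfolding L_def by blast
    ultimately show "\<not> insert 0 (range y) \<subseteq> D" using K(3)[of n] by blast
  qed
qed


theorem theorem8:
  assumes nondiscrete: "\<exists>x::'a::{metric_space, topological_group_add}. \<not> open {x}"
  shows "\<not> (\<exists>B. is_base B (coarse_structure (S_tau :: 'a set set)) \<and> linearly_ordered B) \<and>
         \<not> coarse_metrizable (coarse_structure (S_tau :: 'a set set))"
proof -
  let ?C = "coarse_structure (S_tau :: 'a set set)"
  define d :: "('a \<times> 'a) set \<Rightarrow> 'a set" where "d E = {x. (x, 0) \<in> E}" for E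
  have a: "\<exists>K. compact K \<and> countable K \<and> d E \<subseteq> K" if EC: "E \<in> ?C" for E
  proof -
    obtain A where A: "A \<in> (S_tau::'a set set)" "E \<subseteq> entourage A"
      using EC unfolding coarse_structure_def by blast
    then obtain K where K: "compact K" "countable K" "A \<subseteq> K"
      using S_tau_Inv unfolding Inv_def by blast
    have "d E \<subseteq> A" using A(2) unfolding d_def entourage_def by auto
    then show ?thesis using K by blast
  qed
  have b: "\<exists>E\<in>B. X \<subseteq> d E" if bs: "is_base B ?C" "X \<in> (S_tau::'a set set)" for B X
  proof -
    have "entourage X \<in> ?C" using bs(2) unfolding coarse_structure_def by blast
    then obtain E where "E \<in> B" "entourage X \<subseteq> E" using bs(1) unfolding is_base_def by blast
    moreover have "X \<subseteq> d E" using \<open>entourage X \<subseteq> E\<close> unfolding d_def entourage_def by auto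
    ultimately show ?thesis by blast
  qed
  have nocount: False if nc: "countable B'" "B' \<subseteq> ?C" "\<forall>X\<in>(S_tau::'a set set). \<exists>E\<in>B'. X \<subseteq> d E" for B'
  proof -
    have "\<And>D. D \<in> d ` B' \<Longrightarrow> \<exists>K. compact K \<and> countable K \<and> D \<subseteq> K"
      using a nc(2) by blast
    moreover have "countable (d ` B')" using nc(1) by simp
    ultimately obtain X where X: "X \<in> (S_tau::'a set set)" "\<forall>D\<in>d ` B'. \<not> X \<subseteq> D"
      using L1[OF nondiscrete, of "d ` B'"] by blast
    then show False using nc(3) by blast
  qed
  have part2: "\<not> coarse_metrizable ?C"
    unfolding coarse_metrizable_def
  proof
    assume "\<exists>B. countable B \<and> is_base B ?C"
    then obtain B where "countable B" "is_base B ?C" by blast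
    moreover have "B \<subseteq> ?C" using \<open>is_base B ?C\<close> unfolding is_base_def by blast
    moreover have "\<forall>X\<in>(S_tau::'a set set). \<exists>E\<in>B. X \<subseteq> d E" using b[OF \<open>is_base B ?C\<close>] by blast
    ultimately show False using nocount[of B] by blast
  qed
  have part1: "\<not> (\<exists>B. is_base B ?C \<and> linearly_ordered B)"
  proof
    assume "\<exists>B. is_base B ?C \<and> linearly_ordered B"
    then obtain B where B: "is_base B ?C" "linearly_ordered B" by blast
    have BC: "B \<subseteq> ?C" using B(1) unfolding is_base_def by blast
    show False
    proof (cases "\<exists>B'\<subseteq>B. countable B' \<and> (\<forall>E\<in>B. \<exists>E'\<in>B'. E \<subseteq> E')")
      case True
      then obtain B' where B': "B' \<subseteq> B" "countable B'" "\<forall>E\<in>B. \<exists>E'\<in>B'. E \<subseteq> E'" by blast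
      have allX: "\<forall>X\<in>(S_tau::'a set set). \<exists>E\<in>B'. X \<subseteq> d E"
      proof
        fix X assume XS: "X \<in> (S_tau::'a set set)"
        obtain E where E: "E \<in> B" "X \<subseteq> d E" using b[OF B(1) XS] by blast
        obtain E' where E': "E' \<in> B'" "E \<subseteq> E'" using B'(3) E(1) by blast
        have "d E \<subseteq> d E'" unfolding d_def using E'(2) by blast
        then have "X \<subseteq> d E'" using E(2) by (rule_tac subset_trans) auto
        then show "\<exists>E\<in>B'. X \<subseteq> d E" using E'(1) by blast
      qed
      have B'C: "B' \<subseteq> ?C" using B'(1) BC by blast
      show False by (rule nocount[OF B'(2) B'C allX])
    next
      case False
      have bound: "\<exists>E\<in>B. \<forall>E'\<in>B'. E' \<subseteq> E" if bb: "B' \<subseteq> B" "countable B'" for B'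
      proof -
        have nb: "\<not> (\<forall>E\<in>B. \<exists>E'\<in>B'. E \<subseteq> E')"
        proof
          assume H: "\<forall>E\<in>B. \<exists>E'\<in>B'. E \<subseteq> E'"
          have "\<exists>B'\<subseteq>B. countable B' \<and> (\<forall>E\<in>B. \<exists>E'\<in>B'. E \<subseteq> E')"
            using bb H by (intro exI[of _ B'] conjI)
          then show False using False by (rule notE[rotated])
        qed
        then obtain E where E: "E \<in> B" "\<forall>E'\<in>B'. \<not> E \<subseteq> E'" using nb by blast
        show ?thesis
        proof (rule bexI[OF _ E(1)], rule ballI)
          fix E' assume E': "E' \<in> B'"
          then have "E' \<in> B" using bb(1) by (rule subsetD[rotated])
          then have "E \<subseteq> E' \<or> E' \<subseteq> E" using B(2) E(1) unfolding linearly_ordered_def by simp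
          then show "E' \<subseteq> E" using E(2) E' by simp
        qed
      qed
      have "\<forall>n. \<exists>y::'a. y \<noteq> 0 \<and> dist y 0 < 1 / Suc n"
      proof
        fix n
        show "\<exists>y::'a. y \<noteq> 0 \<and> dist y 0 < 1 / Suc n"
        proof (rule ccontr)
          assume "\<not> ?thesis"
          then have "ball (0::'a) (1 / Suc n) = {0}" by (auto simp: dist_commute)
          then have "open {0::'a}" using open_ball[of "0::'a" "1 / Suc n"] by simp
          then show False using no_isolated[OF nondiscrete] by blast
        qed
      qed
      then obtain x :: "nat \<Rightarrow> 'a" where x: "\<And>n. x n \<noteq> 0" "\<And>n. dist (x n) 0 < 1 / Suc n" by metis
      have x0: "x \<longlonglongrightarrow> 0" using seq_to_lim x(2) by blast
      define H where "H = range (\<lambda>ns. sum_list (map x ns))"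
      have cH: "countable H" unfolding H_def by simp
      have "\<forall>h\<in>H. \<exists>E\<in>B. h \<in> d E"
      proof
        fix h assume "h \<in> H"
        have "{h} \<in> (S_tau::'a set set)" by (rule S_tau_fin) simp
        then obtain E where "E \<in> B" "{h} \<subseteq> d E" using b[OF B(1)] by blast
        then show "\<exists>E\<in>B. h \<in> d E" by blast
      qed
      then obtain Eh where Eh: "\<And>h. h \<in> H \<Longrightarrow> Eh h \<in> B \<and> h \<in> d (Eh h)" by metis
      obtain E where E: "E \<in> B" "\<forall>E'\<in>Eh ` H. E' \<subseteq> E"
        using bound[of "Eh ` H"] Eh cH by blast
      have "H \<subseteq> d E" using E Eh unfolding d_def by blast
      moreover obtain K where K: "compact K" "countable K" "d E \<subseteq> K" using a E(1) BC by blast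
      ultimately have HK: "closure H \<subseteq> K" by (meson closure_minimal compact_imp_closed subset_trans)
      show False
      proof (rule perfect_countable_compact[of "closure H"])
        show "compact (closure H)"
        proof -
          have "compact (K \<inter> closure H)" by (rule compact_Int_closed[OF K(1) closed_closure])
          moreover have "K \<inter> closure H = closure H" using HK by blast
          ultimately show ?thesis by simp
        qed
        show "countable (closure H)" using HK K(2) countable_subset by blast
        show "closure H \<noteq> {}" unfolding H_def by simp
        have limH: "h islimpt H" if "h \<in> H" for h
        proof -
          obtain ns where h: "h = sum_list (map x ns)" using \<open>h \<in> H\<close> unfolding H_def by blast
          have "(\<lambda>n. h + x n) \<longlonglongrightarrow> h + 0" by (intro tendsto_add tendsto_const x0)
          moreover have "h + x n \<in> H - {h}" for n
          proof -
            have eq: "h + x n = sum_list (map x (ns @ [n]))" using h by simp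
            have "h + x n \<in> H" unfolding H_def eq by (rule rangeI)
            moreover have "h + x n \<noteq> h"
            proof
              assume "h + x n = h"
              then have "h + x n = h + 0" by simp
              then have "x n = 0" by (simp only: add_left_cancel)
              then show False using x(1)[of n] by simp
            qed
            ultimately show ?thesis by simp
          qed
          ultimately show ?thesis unfolding islimpt_sequential by (intro exI[of _ "\<lambda>n. h + x n"]) simp
        qed
        fix z assume "z \<in> closure H"
        then have "z \<in> H \<or> z islimpt H" by (simp add: closure_def)
        then have "z islimpt H" using limH by blast
        then show "z islimpt closure H" by (meson closure_subset islimpt_subset)
      qed
    qed
  qed
  show ?thesis using part1 part2 by blast
qed

end
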